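(* Let $g\in\mathbb{F}_q[t]$ be a composite polynomial. Then $g$ is a Carmichael polynomial if and only if (1) $g$ is square-free, and (2) $\deg P$ divides $\deg g$ for every irreducible factor $P$ of $g$.
   Context: $\mathbb{F}_q$ is the finite field with $q$ elements. A composite polynomial is a nonzero, non-constant polynomial that is not irreducible. A finite ring $S$ is a Carmichael ring if $S$ is not a field and $a^{|S|}=a$ for every $a\in S$. A polynomial $g\in\mathbb{F}_q[t]$ is a Carmichael polynomial if $\mathbb{F}_q[t]/(g)$ is a Carmichael ring. *)

theory Defs
  imports "HOL-Computational_Algebra.Computational_Algebra" "HOL-Algebra.QuotRing"
begin

definition carmichael_ring :: "('b, 'c) ring_scheme \<Rightarrow> bool" where
  "carmichael_ring S \<longleftrightarrow> ring S \<and> finite (carrier S) \<and> \<not> Ring.field S \<and>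
     (\<forall>a \<in> carrier S. a [^]\<^bsub>S\<^esub> card (carrier S) = a)"

definition poly_ring :: "'a::field poly ring" where
  "poly_ring = \<lparr>carrier = UNIV, monoid.mult = (*), one = 1, zero = 0, add = (+)\<rparr>"

definition carmichael_poly :: "'a::{field,finite} poly \<Rightarrow> bool" where
  "carmichael_poly g \<longleftrightarrow> carmichael_ring (poly_ring Quot (PIdl\<^bsub>poly_ring\<^esub> g))"

end

theory Submission
  imports Defs "HOL-Algebra.Multiplicative_Group"
begin


lemma cring_poly_ring: "cring (poly_ring :: 'a::field poly ring)"
  apply (rule cringI)
    apply (rule abelian_groupI)
         apply (simp_all add: poly_ring_def algebra_simps)
   apply (rule_tac x="-x" in exI, simp)
  apply (rule comm_monoidI)
      apply (simp_all add: poly_ring_def algebra_simps)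
  done

definition cls :: "'a::field poly \<Rightarrow> 'a poly \<Rightarrow> 'a poly set" where
  "cls g f = {h. g dvd h - f}"

lemma PIdl_poly: "PIdl\<^bsub>poly_ring\<^esub> g = {h. g dvd h}"
  by (auto simp: cgenideal_def poly_ring_def dvd_def mult.commute)

lemma coset_poly: "PIdl\<^bsub>poly_ring\<^esub> g +>\<^bsub>poly_ring\<^esub> f = cls g f"
  unfolding PIdl_poly a_r_coset_def r_coset_def cls_def
  apply (simp add: poly_ring_def)
  apply (rule Set.set_eqI)
  by auto

lemma ideal_PIdl: "ideal (PIdl\<^bsub>poly_ring\<^esub> g) (poly_ring :: 'a::field poly ring)"
  by (rule cring.cgenideal_ideal[OF cring_poly_ring]) (simp add: poly_ring_def)

lemma cls_eq: "cls g f = cls g h \<longleftrightarrow> g dvd f - h"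
proof
  assume "cls g f = cls g h"
  moreover have "f \<in> cls g f" by (simp add: cls_def)
  ultimately show "g dvd f - h" by (simp add: cls_def)
next
  assume a: "g dvd f - h"
  show "cls g f = cls g h"
  proof (rule Set.set_eqI)
    fix x
    have "x - h = (x - f) + (f - h)" "x - f = (x - h) - (f - h)" by simp_all
    then show "x \<in> cls g f \<longleftrightarrow> x \<in> cls g h" using a unfolding cls_def
      by (metis dvd_add dvd_diff mem_Collect_eq)
  qed
qed

abbreviation Q where "Q g \<equiv> poly_ring Quot (PIdl\<^bsub>poly_ring\<^esub> g)"

lemma carrier_poly_ring[simp]: "carrier poly_ring = UNIV"
  by (simp add: poly_ring_def)
lemma mult_poly_ring[simp]: "x \<otimes>\<^bsub>poly_ring\<^esub> y = x * y"
  by (simp add: poly_ring_def)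
lemma one_poly_ring[simp]: "\<one>\<^bsub>poly_ring\<^esub> = 1"
  by (simp add: poly_ring_def)

lemma Q_carrier: "carrier (Q g) = range (cls g)"
  unfolding FactRing_def A_RCOSETS_def' 
  by (auto simp: coset_poly)

lemma Q_mult: "cls g f \<otimes>\<^bsub>Q g\<^esub> cls g h = cls g (f * h)"
  using ideal.rcoset_mult_add[OF ideal_PIdl, of f h g]
  by (simp add: FactRing_def coset_poly)

lemma Q_one: "\<one>\<^bsub>Q g\<^esub> = cls g 1"
  using coset_poly[of g 1] by (simp add: FactRing_def)

lemma Q_zero: "\<zero>\<^bsub>Q g\<^esub> = cls g 0"
  by (simp add: FactRing_def cls_def PIdl_poly)

lemma Q_pow: "cls g f [^]\<^bsub>Q g\<^esub> (n::nat) = cls g (f ^ n)"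
  by (induction n) (simp_all add: Q_one Q_mult mult.commute)

lemma cring_Q: "cring (Q g)"
  by (rule ideal.quotient_is_cring[OF ideal_PIdl cring_poly_ring])

lemma card_deg_less:
  assumes n: "n > 0"
  shows "card {f :: 'a::{zero,finite} poly. degree f < n} = card (UNIV :: 'a set)^n"
proof -
  have "bij_betw (\<lambda>f. map (Polynomial.coeff f) [0..<n]) {f :: 'a poly. degree f < n} {xs. set xs \<subseteq> UNIV \<and> length xs = n}"
  proof (rule bij_betw_imageI)
    show "inj_on (\<lambda>f. map (Polynomial.coeff f) [0..<n]) {f :: 'a poly. degree f < n}"
    proof (rule inj_onI)
      fix f h :: "'a poly"
      assume f: "f \<in> {f. degree f < n}" and h: "h \<in> {f. degree f < n}"
        and e: "map (Polynomial.coeff f) [0..<n] = map (Polynomial.coeff h) [0..<n]"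
      show "f = h"
      proof (rule poly_eqI)
        fix i
        show "Polynomial.coeff f i = Polynomial.coeff h i"
        proof (cases "i < n")
          case True
          from e have "\<forall>x\<in>set [0..<n]. Polynomial.coeff f x = Polynomial.coeff h x" by (simp only: map_eq_conv)
          then show ?thesis using True by simp
        next
          case False
          then show ?thesis using f h by (simp add: coeff_eq_0)
        qed
      qed
    qed
    show "(\<lambda>f. map (Polynomial.coeff f) [0..<n]) ` {f :: 'a poly. degree f < n} = {xs. set xs \<subseteq> UNIV \<and> length xs = n}"
    proof (rule Set.set_eqI, rule iffI)
      fix xs :: "'a list"
      assume "xs \<in> {xs. set xs \<subseteq> UNIV \<and> length xs = n}"
      then have l: "length xs = n" by simp
      have "degree (Poly xs) \<le> n - 1"
        by (rule degree_le) (use l n in \<open>auto simp: nth_default_def\<close>)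
      then have "degree (Poly xs) < n" using n by linarith
      moreover have "map (Polynomial.coeff (Poly xs)) [0..<n] = xs"
        using l by (intro nth_equalityI) (simp_all add: nth_default_def)
      ultimately show "xs \<in> (\<lambda>f. map (Polynomial.coeff f) [0..<n]) ` {f :: 'a poly. degree f < n}"
        by (intro image_eqI[where x="Poly xs"]) simp_all
    qed auto
  qed
  then have "card {f :: 'a poly. degree f < n} = card {xs :: 'a list. set xs \<subseteq> UNIV \<and> length xs = n}"
    by (rule bij_betw_same_card)
  also have "\<dots> = card (UNIV :: 'a set)^n" by (rule card_lists_length_eq) simp
  finally show ?thesis .
qed

lemma cls_mod: "cls g f = cls g (f mod g)"
  unfolding cls_eq by (simp add: minus_mod_eq_mult_div)

lemma Q_carrier_img:
  fixes g :: "'a::{field,finite} poly"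
  assumes "degree g > 0"
  shows "carrier (Q g) = cls g ` {f. degree f < degree g}"
proof -
  have g0: "g \<noteq> 0" using assms by auto
    have "range (cls g) \<subseteq> cls g ` {f. degree f < degree g}"
    proof
      fix x assume "x \<in> range (cls g)"
      then obtain f where "x = cls g f" by auto
      then have "x = cls g (f mod g)" using cls_mod by metis
      moreover have "degree (f mod g) < degree g"
        using assms g0 by (cases "f mod g = 0") (simp_all add: degree_mod_less')
      ultimately show "x \<in> cls g ` {f. degree f < degree g}" by auto
    qed
    then show ?thesis unfolding Q_carrier by auto
qed

lemma finite_Q: 
  fixes g :: "'a::{field,finite} poly"
  assumes "degree g > 0"
  shows "finite (carrier (Q g))"
proof -
  have "card {f :: 'a poly. degree f < degree g} > 0" using card_deg_less[OF assms, where 'a='a] by (simp add: finite_UNIV_card_ge_0)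
  then have "finite {f :: 'a poly. degree f < degree g}" by (rule card_ge_0_finite)
  then show ?thesis unfolding Q_carrier_img[OF assms] by (rule finite_imageI)
qed

lemma card_Q:
  fixes g :: "'a::{field,finite} poly"
  assumes "degree g > 0"
  shows "card (carrier (Q g)) = card (UNIV :: 'a set) ^ degree g"
proof -
  have g0: "g \<noteq> 0" using assms by auto
  have "carrier (Q g) = cls g ` {f. degree f < degree g}" by (rule Q_carrier_img[OF assms])
  moreover have "inj_on (cls g) {f. degree f < degree g}"
  proof (rule inj_onI)
    fix f h assume f: "f \<in> {f. degree f < degree g}" and h: "h \<in> {f. degree f < degree g}"
      and "cls g f = cls g h"
    then have d: "g dvd f - h" by (simp add: cls_eq)
    have "degree (f - h) \<le> max (degree f) (degree h)" by (rule degree_diff_le_max)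
    then have "degree (f - h) < degree g" using f h by simp
    then have "f - h = 0" using dvd_imp_degree_le[OF d] by (cases "f - h = 0") simp_all
    then show "f = h" by simp
  qed
  ultimately show ?thesis by (simp add: card_image card_deg_less assms)
qed



lemma field_pow_card:
  fixes R (structure)
  assumes F: "field R" and fin: "finite (carrier R)" and a: "a \<in> carrier R"
  shows "a [^]\<^bsub>R\<^esub> card (carrier R) = a"
proof -
  interpret field R by (rule F)
  have c1: "card (carrier R) \<ge> 1" proof -
    have "carrier R \<noteq> {}" using a by auto
    then show ?thesis using fin by (simp add: card_gt_0_iff Suc_le_eq)
  qed
  show ?thesis
  proof (cases "a = \<zero>")
    case True
    then show ?thesis using c1 nat_pow_zero by simp
  next
    case False
    then have u: "a \<in> Units R" using a field_Units by simp
    have fu: "finite (Units R)" using fin field_Units by simp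
    have cu: "card (Units R) = card (carrier R) - 1" using field_Units fin by (simp add: card_Diff_singleton)
    have "a [^] card (Units R) = \<one>" by (rule units_power_order_eq_one[OF fu u])
    moreover have "card (carrier R) = Suc (card (Units R))" using cu c1 by simp
    ultimately show ?thesis using a by simp
  qed
qed

lemma field_ord_dvd:
  fixes R (structure)
  assumes F: "field R" and fin: "finite (carrier R)" and N: "N \<ge> 1"
    and all: "\<forall>a\<in>carrier R. a [^]\<^bsub>R\<^esub> N = a"
  shows "(card (carrier R) - 1) dvd (N - 1)"
proof -
  interpret field R by (rule F)
  interpret G: group "mult_of R" by (rule field_mult_group)
  obtain a where a: "a \<in> carrier (mult_of R)" and gen: "carrier (mult_of R) = {a[^]i | i::nat . i \<in> UNIV}"
    using finite_field_mult_group_has_gen[OF fin] by blast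
  have aR: "a \<in> carrier R" and a0: "a \<noteq> \<zero>" using a by auto
  have finG: "finite (carrier (mult_of R))" using fin by simp
  obtain M where NM: "N = Suc M" using N by (cases N) auto
  have "a [^] M \<otimes> a = \<one> \<otimes> a"
    using all aR NM by simp
  then have "a [^] (N - 1) \<otimes> a = \<one> \<otimes> a" using NM by simp
  then have p1: "a [^] (N - 1) = \<one>" using m_rcancel[OF a0 aR, of "a [^] (N - 1)" \<one>] aR by simp
  have "G.ord a dvd (N - 1)"
    using G.pow_eq_id[OF a, of "N - 1"] p1 by (simp add: nat_pow_mult_of)
  moreover have "G.ord a = card (carrier (mult_of R))"
  proof -
    have "G.ord a \<noteq> 0" using G.ord_ge_1[OF finG a] by simp
    then have "generate (mult_of R) {a} = carrier (mult_of R)"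
      using G.generate_pow_nat[OF a] gen by (simp add: nat_pow_mult_of)
    then show ?thesis using G.generate_pow_card[OF a] by simp
  qed
  moreover have "card (carrier (mult_of R)) = card (carrier R) - 1"
    using fin by (simp add: card_Diff_singleton)
  ultimately show ?thesis by simp
qed



lemma irr_deg:
  fixes P :: "'a::field poly"
  assumes "Factorial_Ring.irreducible P" shows "P \<noteq> 0" "degree P > 0"
proof -
  show P0: "P \<noteq> 0" using assms by (simp add: Factorial_Ring.irreducible_def)
  have "\<not> P dvd 1" using assms by (simp add: Factorial_Ring.irreducible_def)
  then show "degree P > 0" using is_unit_iff_degree[OF P0] by simp
qed

lemma field_Q:
  fixes P :: "'a::{field,finite} poly"
  assumes irr: "Factorial_Ring.irreducible P"
  shows "field (Q P)"
proof -
  interpret C: cring "Q P" by (rule cring_Q)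
  have nu: "\<not> P dvd 1" using irr by (simp add: Factorial_Ring.irreducible_def)
  have pe: "prime_elem P" by (rule field_poly_irreducible_imp_prime[OF irr])
  have fin: "finite (carrier (Q P))" by (rule finite_Q[OF irr_deg(2)[OF irr]])
  show ?thesis
  proof (rule C.field_intro2)
    show "\<zero>\<^bsub>Q P\<^esub> \<noteq> \<one>\<^bsub>Q P\<^esub>"
      unfolding Q_zero Q_one cls_eq using nu by simp
  next
    fix x assume x: "x \<in> carrier (Q P) - {\<zero>\<^bsub>Q P\<^esub>}"
    then obtain f where xf: "x = cls P f" unfolding Q_carrier by auto
    have nd: "\<not> P dvd f" using x unfolding xf Q_zero by (simp add: cls_eq)
    let ?phi = "\<lambda>y. x \<otimes>\<^bsub>Q P\<^esub> y"
    have sub: "?phi ` carrier (Q P) \<subseteq> carrier (Q P)"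
      using x by auto
    have inj: "inj_on ?phi (carrier (Q P))"
    proof (rule inj_onI)
      fix y z assume y: "y \<in> carrier (Q P)" and z: "z \<in> carrier (Q P)" and e: "?phi y = ?phi z"
      obtain h1 where yh: "y = cls P h1" using y unfolding Q_carrier by auto
      obtain h2 where zh: "z = cls P h2" using z unfolding Q_carrier by auto
      have "P dvd f * h1 - f * h2" using e unfolding xf yh zh Q_mult by (simp add: cls_eq)
      then have "P dvd f * (h1 - h2)" by (simp add: algebra_simps)
      then have "P dvd h1 - h2" using prime_elem_dvd_multD[OF pe] nd by blast
      then show "y = z" unfolding yh zh by (simp add: cls_eq)
    qed
    have "?phi ` carrier (Q P) = carrier (Q P)" by (rule endo_inj_surj[OF fin sub inj])
    moreover have "\<one>\<^bsub>Q P\<^esub> \<in> carrier (Q P)" by simp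
    ultimately obtain y where y: "y \<in> carrier (Q P)" and xy: "x \<otimes>\<^bsub>Q P\<^esub> y = \<one>\<^bsub>Q P\<^esub>"
      by (metis (no_types, lifting) imageE)
    have "y \<otimes>\<^bsub>Q P\<^esub> x = \<one>\<^bsub>Q P\<^esub>" using xy x y C.m_comm by simp
    then show "x \<in> Units (Q P)" using x y xy unfolding Units_def by blast
  qed
qed

lemma not_field_Q:
  fixes g :: "'a::field poly"
  assumes g0: "g \<noteq> 0" and dg: "degree g > 0" and ni: "\<not> Factorial_Ring.irreducible g"
  shows "\<not> field (Q g)"
proof
  assume F: "field (Q g)"
  interpret F: field "Q g" by (rule F)
  have nu: "\<not> g dvd 1" using is_unit_iff_degree[OF g0] dg by simp
  obtain a b where gab: "g = a * b" and na: "\<not> a dvd 1" and nb: "\<not> b dvd 1"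
    using ni g0 nu unfolding Factorial_Ring.irreducible_def by blast
  have a0: "a \<noteq> 0" and b0: "b \<noteq> 0" using g0 gab by auto
  have da: "degree a > 0" using is_unit_iff_degree[OF a0] na by simp
  have db: "degree b > 0" using is_unit_iff_degree[OF b0] nb by simp
  have dgab: "degree g = degree a + degree b" using gab a0 b0 by (simp add: degree_mult_eq)
  have "\<not> g dvd a" using dvd_imp_degree_le[of g a] a0 dgab db by auto
  then have za: "cls g a \<noteq> \<zero>\<^bsub>Q g\<^esub>" unfolding Q_zero cls_eq by simp
  have "\<not> g dvd b" using dvd_imp_degree_le[of g b] b0 dgab da by auto
  then have zb: "cls g b \<noteq> \<zero>\<^bsub>Q g\<^esub>" unfolding Q_zero cls_eq by simp
  have "cls g a \<otimes>\<^bsub>Q g\<^esub> cls g b = \<zero>\<^bsub>Q g\<^esub>" unfolding Q_mult Q_zero cls_eq gab by simp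
  then show False using F.integral[of "cls g a" "cls g b"] za zb unfolding Q_carrier by simp
qed

lemma pow_sub1_dvd:
  fixes q :: nat
  assumes q: "q \<ge> 2"
  shows "(q ^ k - 1) dvd (q ^ d - 1) \<Longrightarrow> k dvd d"
proof (induction d rule: less_induct)
  case (less d)
  show ?case
  proof (cases "k = 0")
    case True
    then have "q ^ d - 1 = 0" using less.prems by simp
    then have "q ^ d \<le> 1" by simp
    moreover have "d = 0" proof (rule ccontr)
      assume "d \<noteq> 0"
      then have "q ^ 1 \<le> q ^ d" using q by (intro power_increasing) auto
      then show False using \<open>q ^ d \<le> 1\<close> q by simp
    qed
    ultimately show ?thesis by simp
  next
    case k: False
    show ?thesis
    proof (cases "d < k")
      case True
      have "q ^ d < q ^ k" using True q by (simp add: power_strict_increasing)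
      moreover have "q ^ d \<ge> 1" using q by simp
      ultimately have "q ^ d - 1 < q ^ k - 1" by linarith
      then have "q ^ d - 1 = 0" using less.prems by (auto dest: dvd_imp_le)
      then have "q ^ d \<le> 1" by simp
      moreover have "d = 0" proof (rule ccontr)
      assume "d \<noteq> 0"
      then have "q ^ 1 \<le> q ^ d" using q by (intro power_increasing) auto
      then show False using \<open>q ^ d \<le> 1\<close> q by simp
    qed
      ultimately show ?thesis by simp
    next
      case False
      define e where "e = d - k"
      have de: "d = e + k" using False e_def by simp
      have "q ^ d - 1 = q ^ e * (q ^ k - 1) + (q ^ e - 1)"
      proof -
        have "q ^ e \<ge> 1" "q ^ k \<ge> 1" using q by simp_all
        then show ?thesis unfolding de power_add by (simp add: algebra_simps diff_mult_distrib2)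
      qed
      then have "(q ^ k - 1) dvd (q ^ e - 1)" using less.prems by (simp add: dvd_add_right_iff)
      moreover have "e < d" using k de by simp
      ultimately have "k dvd e" using less.IH by blast
      then show ?thesis using de by simp
    qed
  qed
qed



lemma carm_iff:
  fixes g :: "'a::{field,finite} poly"
  assumes g0: "g \<noteq> 0" and dg: "degree g > 0" and ni: "\<not> Factorial_Ring.irreducible g"
  shows "carmichael_poly g \<longleftrightarrow> (\<forall>f. g dvd f ^ (card (UNIV::'a set) ^ degree g) - f)"
proof -
  have r: "ring (Q g)" using cring_Q by (rule cring.axioms(1))
  have "carmichael_poly g \<longleftrightarrow> (\<forall>a\<in>carrier (Q g). a [^]\<^bsub>Q g\<^esub> card (carrier (Q g)) = a)"
    unfolding carmichael_poly_def carmichael_ring_def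
    using r finite_Q[OF dg] not_field_Q[OF g0 dg ni] by simp
  also have "\<dots> \<longleftrightarrow> (\<forall>f. g dvd f ^ (card (UNIV::'a set) ^ degree g) - f)"
    unfolding card_Q[OF dg] unfolding Q_carrier by (simp add: Q_pow cls_eq)
  finally show ?thesis .
qed

lemma fermat:
  fixes P :: "'a::{field,finite} poly"
  assumes irr: "Factorial_Ring.irreducible P"
  shows "P dvd f ^ (card (UNIV::'a set) ^ degree P) - f"
proof -
  have "cls P f [^]\<^bsub>Q P\<^esub> card (carrier (Q P)) = cls P f"
    by (rule field_pow_card[OF field_Q[OF irr] finite_Q[OF irr_deg(2)[OF irr]]]) (simp add: Q_carrier)
  then show ?thesis unfolding card_Q[OF irr_deg(2)[OF irr]] Q_pow cls_eq .
qed

lemma fermat_iter: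
  fixes P :: "'a::{field,finite} poly"
  assumes irr: "Factorial_Ring.irreducible P"
  shows "P dvd f ^ (card (UNIV::'a set) ^ (degree P * m)) - f"
proof (induction m)
  case 0
  then show ?case by simp
next
  case (Suc m)
  define q where "q = card (UNIV::'a set)"
  define h where "h = f ^ (q ^ (degree P * m))"
  have "P dvd h ^ (q ^ degree P) - h" unfolding q_def by (rule fermat[OF irr])
  moreover have "P dvd h - f" using Suc unfolding h_def q_def .
  ultimately have "P dvd (h ^ (q ^ degree P) - h) + (h - f)" by (rule dvd_add)
  moreover have "h ^ (q ^ degree P) = f ^ (q ^ (degree P * Suc m))"
    unfolding h_def by (simp add: power_mult[symmetric] power_add mult.commute)
  ultimately show ?case unfolding q_def by simp
qed

lemma irr_factor_exists:
  fixes g :: "'a::field poly"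
  shows "g \<noteq> 0 \<Longrightarrow> \<not> g dvd 1 \<Longrightarrow> \<exists>P. Factorial_Ring.irreducible P \<and> P dvd g"
proof (induction "degree g" arbitrary: g rule: less_induct)
  case less
  show ?case
  proof (cases "Factorial_Ring.irreducible g")
    case True then show ?thesis by (intro exI[of _ g]) simp
  next
    case False
    then obtain a b where gab: "g = a * b" and na: "\<not> a dvd 1" and nb: "\<not> b dvd 1"
      using less.prems unfolding Factorial_Ring.irreducible_def by blast
    have a0: "a \<noteq> 0" and b0: "b \<noteq> 0" using less.prems gab by auto
    have db: "degree b > 0" using is_unit_iff_degree[OF b0] nb by simp
    have "degree g = degree a + degree b" using gab a0 b0 by (simp add: degree_mult_eq)
    then have "degree a < degree g" using db by simp
    then obtain P where "Factorial_Ring.irreducible P" "P dvd a" using less.hyps a0 na by blast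
    then show ?thesis using gab by auto
  qed
qed

lemma sqf_combine:
  fixes g :: "'a::field poly"
  shows "g \<noteq> 0 \<Longrightarrow> squarefree g \<Longrightarrow> (\<forall>P. Factorial_Ring.irreducible P \<and> P dvd g \<longrightarrow> P dvd X) \<Longrightarrow> g dvd X"
proof (induction "degree g" arbitrary: g rule: less_induct)
  case less
  show ?case
  proof (cases "g dvd 1")
    case True then show ?thesis by (meson dvd_trans one_dvd)
  next
    case False
    obtain P where irr: "Factorial_Ring.irreducible P" and Pg: "P dvd g"
      using irr_factor_exists[OF less.prems(1) False] by blast
    obtain h where gPh: "g = P * h" using Pg by blast
    have P0: "P \<noteq> 0" and h0: "h \<noteq> 0" using gPh less.prems(1) by auto
    have pe: "prime_elem P" by (rule field_poly_irreducible_imp_prime[OF irr])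
    have nPh: "\<not> P dvd h"
    proof
      assume "P dvd h"
      then have "P ^ 2 dvd g" unfolding gPh by (simp add: power2_eq_square)
      then show False using squarefreeD[OF less.prems(2)] irr by (simp add: Factorial_Ring.irreducible_def)
    qed
    have "degree g = degree P + degree h" using gPh P0 h0 by (simp add: degree_mult_eq)
    then have "degree h < degree g" using irr_deg(2)[OF irr] by simp
    moreover have "squarefree h" using less.prems(2) gPh by (metis dvd_triv_right squarefree_mono)
    moreover have "\<forall>R. Factorial_Ring.irreducible R \<and> R dvd h \<longrightarrow> R dvd X"
      using less.prems(3) gPh by (meson dvd_mult_right dvd_trans dvd_triv_right)
    ultimately have hX: "h dvd X" using less.hyps h0 by blast
    then obtain m where Xm: "X = h * m" by blast
    have "P dvd X" using less.prems(3) irr Pg by blast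
    then have "P dvd m" using prime_elem_dvd_multD[OF pe, of h m] nPh Xm by blast
    then show ?thesis unfolding gPh Xm by (simp add: mult.commute mult_dvd_mono)
  qed
qed



lemma card_ge2: "card (UNIV :: 'a::{field,finite} set) \<ge> 2"
proof -
  have "{0::'a, 1} \<subseteq> UNIV" by simp
  then have "card {0::'a, 1} \<le> card (UNIV :: 'a set)" by (rule card_mono[OF finite_UNIV])
  then show ?thesis by simp
qed

theorem theorem4p1:
  fixes g :: "'a::{field,finite} poly"
  assumes "g \<noteq> 0" and "degree g > 0" and "\<not> Factorial_Ring.irreducible g"
  shows "carmichael_poly g \<longleftrightarrow>
           (squarefree g \<and>
            (\<forall>P. Factorial_Ring.irreducible P \<and> P dvd g \<longrightarrow> degree P dvd degree g))"
proof -
  define q where "q = card (UNIV :: 'a set)"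
  define N where "N = q ^ degree g"
  have q2: "q \<ge> 2" unfolding q_def by (rule card_ge2)
  have N2: "N \<ge> 2"
  proof -
    have "q ^ 1 \<le> q ^ degree g" using q2 assms(2) by (intro power_increasing) auto
    then show ?thesis using q2 unfolding N_def by simp
  qed
  have ci: "carmichael_poly g \<longleftrightarrow> (\<forall>f. g dvd f ^ N - f)"
    unfolding N_def q_def by (rule carm_iff[OF assms])
  show ?thesis unfolding ci
  proof (intro iffI conjI allI impI)
    assume H: "\<forall>f. g dvd f ^ N - f"
    show "squarefree g"
    proof (rule squarefreeI)
      fix x :: "'a poly" assume x2: "x ^ 2 dvd g"
      have x0: "x \<noteq> 0" using x2 assms(1) by auto
      have "x ^ 2 dvd x ^ N - x" using dvd_trans[OF x2] H by blast
      moreover have "x ^ 2 dvd x ^ N" using N2 by (rule le_imp_power_dvd)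
      ultimately have "x ^ 2 dvd x ^ N - (x ^ N - x)" by (rule dvd_diff[rotated])
      then have "x * x dvd x * 1" by (simp add: power2_eq_square)
      then show "x dvd 1" using x0 by simp
    qed
  next
    fix P :: "'a poly"
    assume H: "\<forall>f. g dvd f ^ N - f" and PP: "Factorial_Ring.irreducible P \<and> P dvd g"
    then have irr: "Factorial_Ring.irreducible P" and Pg: "P dvd g" by auto
    have dP: "degree P > 0" by (rule irr_deg(2)[OF irr])
    have all: "\<forall>a\<in>carrier (Q P). a [^]\<^bsub>Q P\<^esub> N = a"
    proof
      fix a assume "a \<in> carrier (Q P)"
      then obtain f where af: "a = cls P f" unfolding Q_carrier by auto
      have "P dvd f ^ N - f" using dvd_trans[OF Pg] H by blast
      then show "a [^]\<^bsub>Q P\<^esub> N = a" unfolding af Q_pow by (simp add: cls_eq)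
    qed
    have "(card (carrier (Q P)) - 1) dvd (N - 1)"
      by (rule field_ord_dvd[OF field_Q[OF irr] finite_Q[OF dP]]) (use N2 all in auto)
    then have "(q ^ degree P - 1) dvd (q ^ degree g - 1)"
      unfolding card_Q[OF dP] N_def q_def .
    then show "degree P dvd degree g" by (rule pow_sub1_dvd[OF q2])
  next
    fix f :: "'a poly"
    assume H: "squarefree g \<and> (\<forall>P. Factorial_Ring.irreducible P \<and> P dvd g \<longrightarrow> degree P dvd degree g)"
    show "g dvd f ^ N - f"
    proof (rule sqf_combine[OF assms(1)])
      show "squarefree g" using H by blast
      show "\<forall>P. Factorial_Ring.irreducible P \<and> P dvd g \<longrightarrow> P dvd f ^ N - f"
      proof (intro allI impI)
        fix P :: "'a poly" assume PP: "Factorial_Ring.irreducible P \<and> P dvd g"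
        then obtain m where "degree g = degree P * m" using H by blast
        then show "P dvd f ^ N - f" unfolding N_def q_def using fermat_iter PP by metis
      qed
    qed
  qed
qed


end
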